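(* Let $n\ge0$, $r\in\mathcal{Y}_n$ and $\mathsf{R}\subseteq[n]$, regarded as a set of internal nodes of $r$ via the in-order labeling. Then $\lambda(\pi_{\mathsf{R}})\le r$ in the Tamari order if and only if $\mathsf{R}$ is admissible.
   Context: Permutations in one-line notation; $\mathrm{st}$ standardizes sequences of distinct integers. For $\mathsf{R}=\{R_1<\dots<R_p\}\subseteq[n]$ with complement $\{R^c_1<\dots<R^c_q\}$, $\pi_{\mathsf{R}}\in\mathfrak{S}_n$ is defined by $\pi_{\mathsf{R}}^{-1}=(R_1,..,R_p,R^c_1,..,R^c_q)$ in one-line notation. Trees: $\mathcal{Y}_n$ = rooted planar binary trees with $n$ internal nodes, $\mathcal{Y}_0=\{|\}$; $s\vee t$ = root with left subtree $s$, right subtree $t$. Tamari order: generated by replacing a subtree $(a\vee b)\vee c$ by the larger $a\vee(b\vee c)$. $\lambda(\mathrm{id}_0)=|$, $\lambda(\sigma)=\lambda(\mathrm{st}(\sigma(1..j-1)))\vee\lambda(\mathrm{st}(\sigma(j+1..n)))$ where $j=\sigma^{-1}(n)$. In-order labeling of the internal nodes of $r\in\mathcal{Y}_n$ by $1,\dots,n$: if $r=s\vee t$ with $s\in\mathcal{Y}_{j-1}$, the root gets label $j$, nodes of $s$ keep their labels in $s$, and nodes of $t$ get their labels in $t$ increased by $j$. A set $\mathsf{R}$ of internal nodes is admissible if for each $x\in\mathsf{R}$ the left child of $x$ (if internal) and all its internal descendants lie in $\mathsf{R}$. *)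

theory Defs
  imports Main
begin

datatype btree = Leaf | Node btree btree

fun nodes :: "btree \<Rightarrow> nat" where
  "nodes Leaf = 0"
| "nodes (Node s t) = nodes s + nodes t + 1"

inductive tamari_step :: "btree \<Rightarrow> btree \<Rightarrow> bool" where
  rot: "tamari_step (Node (Node a b) c) (Node a (Node b c))"
| left: "tamari_step s s' \<Longrightarrow> tamari_step (Node s t) (Node s' t)"
| right: "tamari_step t t' \<Longrightarrow> tamari_step (Node s t) (Node s t')"

definition tamari_le :: "btree \<Rightarrow> btree \<Rightarrow> bool" where
  "tamari_le = tamari_step\<^sup>*\<^sup>*"

fun idx :: "nat list \<Rightarrow> nat \<Rightarrow> nat" where
  "idx [] x = 0"
| "idx (y # ys) x = (if y = x then 0 else Suc (idx ys x))"

definition st :: "nat list \<Rightarrow> nat list" where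
  "st xs = map (\<lambda>x. card {y \<in> set xs. y \<le> x}) xs"

lemma length_st[simp]: "length (st xs) = length xs"
  by (simp add: st_def)

function lam :: "nat list \<Rightarrow> btree" where
  "lam xs = (if xs = [] then Leaf else
     (let j = idx xs (Max (set xs)) in
       Node (lam (st (take j xs))) (lam (st (drop (Suc j) xs)))))"
  by pat_completeness auto
termination
proof (relation "measure length")
  fix xs :: "nat list" and j
  assume "xs \<noteq> []" "j = idx xs (Max (set xs))"
  have "idx xs (Max (set xs)) < length xs" using \<open>xs \<noteq> []\<close>
  proof (induction xs)
    case Nil then show ?case by simp
  next
    case (Cons y ys) then show ?case
      by (cases "ys = []") auto
  qed
  then show "(st (take j xs), xs) \<in> measure length"
    "(st (drop (Suc j) xs), xs) \<in> measure length"
    using \<open>j = _\<close> \<open>xs \<noteq> []\<close> by auto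
qed auto

declare lam.simps[simp del]

text \<open>pi_R in one-line notation: its inverse in one-line notation is R (sorted) followed by
  the complement of R in [n] (sorted); so pi_R(k) = 1 + position of k in that list.\<close>
definition piR :: "nat \<Rightarrow> nat set \<Rightarrow> nat list" where
  "piR n R = (let L = sorted_list_of_set R @ sorted_list_of_set ({1..n} - R)
              in map (\<lambda>k. Suc (idx L k)) [1..<Suc n])"

text \<open>In-order labelling: leftdesc r x = labels of the internal nodes in the left subtree
  of the internal node labelled x (i.e. the left child, if internal, and all its internal
  descendants).\<close>
fun leftdesc :: "btree \<Rightarrow> nat \<Rightarrow> nat set" where
  "leftdesc Leaf x = {}"
| "leftdesc (Node s t) x =
     (if x = Suc (nodes s) then {1..nodes s}
      else if x \<le> nodes s then leftdesc s x
      else (\<lambda>y. y + Suc (nodes s)) ` leftdesc t (x - Suc (nodes s)))"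

definition admissible :: "btree \<Rightarrow> nat set \<Rightarrow> bool" where
  "admissible r R \<longleftrightarrow> (\<forall>x\<in>R. leftdesc r x \<subseteq> R)"

end

theory Submission
  imports Defs
begin

lemma tl_refl[simp]: "tamari_le a a" by (simp add: tamari_le_def)
lemma tl_trans[trans]: "tamari_le a b \<Longrightarrow> tamari_le b c \<Longrightarrow> tamari_le a c"
  unfolding tamari_le_def by (rule rtranclp_trans)
lemma tl_step: "tamari_step a b \<Longrightarrow> tamari_le a b"
  unfolding tamari_le_def by (rule r_into_rtranclp)
lemma tl_left: "tamari_le a a' \<Longrightarrow> tamari_le (Node a b) (Node a' b)"
  unfolding tamari_le_def
  by (induction rule: rtranclp_induct) (auto intro: rtranclp.rtrancl_into_rtrancl tamari_step.left)
lemma tl_right: "tamari_le b b' \<Longrightarrow> tamari_le (Node a b) (Node a b')"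
  unfolding tamari_le_def
  by (induction rule: rtranclp_induct) (auto intro: rtranclp.rtrancl_into_rtrancl tamari_step.right)
lemma tl_node: "tamari_le a a' \<Longrightarrow> tamari_le b b' \<Longrightarrow> tamari_le (Node a b) (Node a' b')"
  by (meson tl_left tl_right tl_trans)
lemma tl_rot: "tamari_le (Node (Node a b) c) (Node a (Node b c))"
  by (rule tl_step) (rule tamari_step.rot)

fun comb :: "nat \<Rightarrow> btree" where
  "comb 0 = Leaf"
| "comb (Suc k) = Node (comb k) Leaf"

fun Lf :: "btree \<Rightarrow> nat list \<Rightarrow> btree" where
  "Lf B [] = B"
| "Lf B (x # xs) = Lf (Node B (comb x)) xs"

fun blocks :: "bool list \<Rightarrow> nat \<times> nat list" where
  "blocks [] = (0, [])"
| "blocks (True # bs) = (Suc (fst (blocks bs)), snd (blocks bs))"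
| "blocks (False # bs) = (0, fst (blocks bs) # snd (blocks bs))"

definition F :: "bool list \<Rightarrow> btree" where
  "F bs = Lf (comb (fst (blocks bs))) (snd (blocks bs))"

lemma nodes_comb[simp]: "nodes (comb k) = k" by (induction k) auto

lemma comb_le: "tamari_le (comb (Suc (a + h))) (Node (comb a) (comb h))"
proof (induction h)
  case 0 then show ?case by simp
next
  case (Suc h)
  have "tamari_le (comb (Suc (a + Suc h))) (Node (Node (comb a) (comb h)) Leaf)"
    using Suc by (simp add: tl_left)
  also have "tamari_le \<dots> (Node (comb a) (comb (Suc h)))" using tl_rot by simp
  finally show ?case .
qed

lemma Lf_mono: "tamari_le B B' \<Longrightarrow> tamari_le (Lf B xs) (Lf B' xs)"
  by (induction xs arbitrary: B B') (auto intro: tl_left)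

lemma Lf_append: "Lf B (gs @ hs) = Lf (Lf B gs) hs"
  by (induction gs arbitrary: B) auto

lemma Lf_node: "tamari_le (Lf (Node P Y) xs) (Node P (Lf Y xs))"
proof (induction xs arbitrary: Y)
  case Nil then show ?case by simp
next
  case (Cons x xs)
  have "tamari_le (Lf (Node (Node P Y) (comb x)) xs) (Lf (Node P (Node Y (comb x))) xs)"
    by (rule Lf_mono) (rule tl_rot)
  also have "tamari_le \<dots> (Node P (Lf (Node Y (comb x)) xs))" by (rule Cons)
  finally show ?case by simp
qed

lemma blocks_False: "blocks (xs @ False # ys) = (fst (blocks xs), snd (blocks xs) @ fst (blocks ys) # snd (blocks ys))"
  by (induction xs rule: blocks.induct) auto

lemma blocks_True: "blocks (replicate k True @ ys) = (k + fst (blocks ys), snd (blocks ys))"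
  by (induction k) auto

lemma F_rep: "F (replicate k True) = comb k"
  using blocks_True[of k "[]"] by (simp add: F_def)

lemma F_split: "F (xs @ False # replicate h True) = Node (F xs) (comb h)"
  using blocks_True[of h "[]"] by (simp add: F_def blocks_False Lf_append)

lemma K: assumes "b \<longrightarrow> (\<forall>x\<in>set xs. x)"
  shows "tamari_le (F (xs @ b # ys)) (Node (F xs) (F ys))"
proof (cases b)
  case False
  then show ?thesis
    using Lf_node[of "F xs" "comb (fst (blocks ys))" "snd (blocks ys)"]
    by (simp add: F_def blocks_False Lf_append)
next
  case True
  define k where "k = length xs"
  have xs: "replicate k True = xs" unfolding k_def
    using assms True by (intro replicate_length_same) auto
  have eq: "xs @ b # ys = replicate (Suc k) True @ ys"
  proof -
    have "replicate (Suc k) True @ ys = replicate k True @ True # ys"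
      by (simp add: replicate_append_same[symmetric])
    then show ?thesis using xs True by simp
  qed
  have "tamari_le (F (xs @ b # ys)) (Lf (Node (comb k) (comb (fst (blocks ys)))) (snd (blocks ys)))"
    unfolding eq F_def blocks_True using comb_le Lf_mono by simp
  also have "tamari_le \<dots> (Node (comb k) (F ys))" unfolding F_def by (rule Lf_node)
  also have "comb k = F xs" using F_rep[of k] xs by simp
  finally show ?thesis .
qed

fun admL :: "btree \<Rightarrow> bool list \<Rightarrow> bool" where
  "admL Leaf bs = True"
| "admL (Node s t) bs = (admL s (take (nodes s) bs) \<and> admL t (drop (Suc (nodes s)) bs)
     \<and> (bs ! nodes s \<longrightarrow> (\<forall>i<nodes s. bs ! i)))"

lemma B1: "length bs = nodes r \<Longrightarrow> admL r bs \<Longrightarrow> tamari_le (F bs) r"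
proof (induction r arbitrary: bs)
  case Leaf then show ?case by (simp add: F_def)
next
  case (Node s t)
  define k where "k = nodes s"
  have bs: "bs = take k bs @ bs ! k # drop (Suc k) bs" using Node.prems k_def
    by (simp add: id_take_nth_drop)
  have "tamari_le (F bs) (Node (F (take k bs)) (F (drop (Suc k) bs)))"
    apply (subst bs) apply (rule K) using Node.prems k_def
    by (auto simp: in_set_conv_nth)
  also have "tamari_le \<dots> (Node s t)"
    using Node k_def by (intro tl_node) auto
  finally show ?case .
qed

lemma step_nodes: "tamari_step t r \<Longrightarrow> nodes t = nodes r"
  by (induction rule: tamari_step.induct) auto

lemma step_admL: "tamari_step t r \<Longrightarrow> length bs = nodes t \<Longrightarrow> admL t bs \<Longrightarrow> admL r bs"
proof (induction arbitrary: bs rule: tamari_step.induct)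
  case (rot a b c)
  define na where "na = nodes a"
  define nb where "nb = nodes b"
  define D where "D = drop (Suc na) bs"
  have len: "length bs = na + nb + 1 + nodes c + 1" using rot.prems(1) na_def nb_def by simp
  define T where "T = take (na + nb + 1) bs"
  have P: "admL (Node a b) T" "admL c (drop (Suc (na + nb + 1)) bs)"
    "bs ! (na + nb + 1) \<longrightarrow> (\<forall>i<na + nb + 1. bs ! i)"
    using rot.prems(2) unfolding T_def na_def nb_def admL.simps nodes.simps by blast+
  have P2: "admL a (take na T)" "admL b (drop (Suc na) T)" "T ! na \<longrightarrow> (\<forall>i<na. T ! i)"
    using P(1) unfolding na_def admL.simps by blast+
  have e1: "take na T = take na bs" unfolding T_def by simp
  have e2: "drop (Suc na) T = take nb D" unfolding T_def D_def by (simp add: drop_take)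
  have e3: "drop (Suc (na + nb + 1)) bs = drop (Suc nb) D" unfolding D_def by (simp add: add.commute)
  have e4: "\<And>i. i < na + nb + 1 \<Longrightarrow> T ! i = bs ! i" unfolding T_def by simp
  have H: "admL a (take na bs)" "admL b (take nb D)" "admL c (drop (Suc nb) D)"
    "bs ! na \<longrightarrow> (\<forall>i<na. bs ! i)" "bs ! (Suc (na + nb)) \<longrightarrow> (\<forall>i<Suc (na + nb). bs ! i)"
  proof -
    show "admL a (take na bs)" using P2(1) e1 by simp
    show "admL b (take nb D)" using P2(2) e2 by simp
    show "admL c (drop (Suc nb) D)" using P(2) e3 by simp
    show "bs ! na \<longrightarrow> (\<forall>i<na. bs ! i)" using P2(3) e4[of na] e4 by simp
    show "bs ! (Suc (na + nb)) \<longrightarrow> (\<forall>i<Suc (na + nb). bs ! i)" using P(3) by simp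
  qed
  have Dn: "\<And>i. i < nb + 1 + nodes c \<Longrightarrow> D ! i = bs ! (Suc na + i)"
    unfolding D_def using len by simp
  have "D ! nb \<longrightarrow> (\<forall>i<nb. D ! i)"
  proof
    assume "D ! nb"
    then have "bs ! (Suc (na + nb))" using Dn[of nb] by simp
    then have "\<forall>i<Suc (na + nb). bs ! i" using H(5) by blast
    then show "\<forall>i<nb. D ! i" using Dn by simp
  qed
  then have "admL (Node b c) D" using H(2,3) nb_def by simp
  then show ?case using H(1,4) na_def D_def by simp
next
  case (left s s' t)
  then show ?case using step_nodes by fastforce
next
  case (right t t' s)
  then show ?case by auto
qed

lemma le_nodes: "tamari_le t r \<Longrightarrow> nodes t = nodes r"
  unfolding tamari_le_def
  by (induction rule: rtranclp_induct) (auto dest: step_nodes)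

lemma le_admL0: "tamari_step\<^sup>*\<^sup>* t r \<Longrightarrow> length bs = nodes t \<Longrightarrow> admL t bs \<Longrightarrow> admL r bs"
proof (induction rule: rtranclp_induct)
  case base then show ?case by simp
next
  case (step y z)
  have "nodes t = nodes y" using le_nodes[unfolded tamari_le_def, OF step.hyps(1)] .
  then show ?case using step step_admL by simp
qed

lemma le_admL: "tamari_le t r \<Longrightarrow> length bs = nodes r \<Longrightarrow> admL t bs \<Longrightarrow> admL r bs"
  using le_admL0 le_nodes unfolding tamari_le_def by metis

lemma admL_comb: "admL (comb x) (replicate x True)"
proof (induction x)
  case 0 then show ?case by simp
next
  case (Suc x)
  have "take x (replicate (Suc x) True) = replicate x True"
    by (metis take_replicate min.absorb1 le_SucI order_refl)
  moreover have "\<forall>i<x. replicate (Suc x) True ! i" by (simp del: replicate.simps)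
  ultimately show ?case using Suc by (simp only: comb.simps admL.simps nodes_comb) simp
qed

lemma admL_Lf: "length cs = nodes B \<Longrightarrow> admL B cs \<Longrightarrow>
   admL (Lf B gs) (cs @ concat (map (\<lambda>g. False # replicate g True) gs))"
proof (induction gs arbitrary: B cs)
  case Nil then show ?case by simp
next
  case (Cons g gs)
  have "admL (Node B (comb g)) (cs @ False # replicate g True)"
    using Cons.prems admL_comb by (auto simp: nth_append)
  then have "admL (Lf (Node B (comb g)) gs) ((cs @ False # replicate g True) @ concat (map (\<lambda>g. False # replicate g True) gs))"
    using Cons.prems by (intro Cons.IH) auto
  then show ?case by simp
qed

lemma blocks_decomp: "bs = replicate (fst (blocks bs)) True @ concat (map (\<lambda>g. False # replicate g True) (snd (blocks bs)))"
  by (induction bs rule: blocks.induct) auto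

lemma admL_F: "admL (F bs) bs"
  using admL_Lf[of "replicate (fst (blocks bs)) True" "comb (fst (blocks bs))" "snd (blocks bs)"]
    admL_comb blocks_decomp[of bs] by (simp add: F_def)


definition pat :: "nat list \<Rightarrow> bool list \<Rightarrow> bool" where
  "pat xs bs \<longleftrightarrow> length xs = length bs \<and> distinct xs \<and>
     (\<forall>i j. i < j \<longrightarrow> j < length xs \<longrightarrow> (xs ! i < xs ! j \<longleftrightarrow> (bs ! j \<longrightarrow> bs ! i)))"

lemma idx_lt: "x \<in> set xs \<Longrightarrow> idx xs x < length xs"
  by (induction xs) auto
lemma idx_nth: "x \<in> set xs \<Longrightarrow> xs ! idx xs x = x"
  by (induction xs) auto

lemma card_le_less:
  fixes a b :: nat assumes "finite A" "a \<in> A" "b \<in> A"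
  shows "card {y \<in> A. y \<le> a} < card {y \<in> A. y \<le> b} \<longleftrightarrow> a < b"
proof
  assume "a < b"
  then have "{y \<in> A. y \<le> a} \<subseteq> {y \<in> A. y \<le> b}" "b \<in> {y \<in> A. y \<le> b}" "b \<notin> {y \<in> A. y \<le> a}"
    using assms by auto
  then have "{y \<in> A. y \<le> a} \<subset> {y \<in> A. y \<le> b}" by blast
  then show "card {y \<in> A. y \<le> a} < card {y \<in> A. y \<le> b}"
    using assms by (intro psubset_card_mono) auto
next
  assume h: "card {y \<in> A. y \<le> a} < card {y \<in> A. y \<le> b}"
  show "a < b"
  proof (rule ccontr)
    assume "\<not> a < b"
    then have "{y \<in> A. y \<le> b} \<subseteq> {y \<in> A. y \<le> a}" by auto
    then have "card {y \<in> A. y \<le> b} \<le> card {y \<in> A. y \<le> a}"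
      using assms by (intro card_mono) auto
    then show False using h by simp
  qed
qed

lemma st_nth: "i < length xs \<Longrightarrow> st xs ! i = card {y \<in> set xs. y \<le> xs ! i}"
  by (simp add: st_def)

lemma st_less: "i < length xs \<Longrightarrow> j < length xs \<Longrightarrow> (st xs ! i < st xs ! j \<longleftrightarrow> xs ! i < xs ! j)"
  by (simp add: st_nth card_le_less)

lemma pat_st: assumes "pat xs bs" shows "pat (st xs) bs"
proof -
  have "distinct (st xs)"
  proof (subst distinct_conv_nth, intro allI impI)
    fix i j assume ij: "i < length (st xs)" "j < length (st xs)" "i \<noteq> j"
    then have "xs ! i \<noteq> xs ! j" using assms by (simp add: pat_def nth_eq_iff_index_eq)
    then have "xs ! i < xs ! j \<or> xs ! j < xs ! i" by auto
    then show "st xs ! i \<noteq> st xs ! j" using st_less[of i xs j] st_less[of j xs i] ij by auto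
  qed
  then show ?thesis using assms st_less unfolding pat_def by auto
qed

lemma pat_take: "pat xs bs \<Longrightarrow> pat (take k xs) (take k bs)"
  unfolding pat_def by auto

lemma pat_drop: assumes "pat xs bs" shows "pat (drop k xs) (drop k bs)"
proof -
  have "\<And>i j. i < j \<Longrightarrow> j < length xs - k \<Longrightarrow> (xs ! (k + i) < xs ! (k + j) \<longleftrightarrow> (bs ! (k + j) \<longrightarrow> bs ! (k + i)))"
    using assms unfolding pat_def by auto
  then show ?thesis using assms unfolding pat_def by auto
qed

lemma F_nil: "F [] = Leaf" by (simp add: F_def)

lemma lam_nil: "lam [] = Leaf" by (simp add: lam.simps)

lemma lam_pat: "pat xs bs \<Longrightarrow> lam xs = F bs"
proof (induction "length xs" arbitrary: xs bs rule: less_induct)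
  case less
  show ?case
  proof (cases "xs = []")
    case True
    then show ?thesis using less.prems by (simp add: pat_def lam_nil F_nil)
  next
    case ne: False
    define j where "j = idx xs (Max (set xs))"
    define n where "n = length xs"
    have len: "length bs = n" using less.prems n_def by (simp add: pat_def)
    have mx: "Max (set xs) \<in> set xs" using ne by simp
    have jn: "j < n" using idx_lt[OF mx] j_def n_def by simp
    have xj: "xs ! j = Max (set xs)" using idx_nth[OF mx] j_def by simp
    have big: "xs ! i < xs ! j" if "i < n" "i \<noteq> j" for i
    proof -
      have "xs ! i \<le> xs ! j" using xj that n_def by simp
      moreover have "xs ! i \<noteq> xs ! j" using less.prems that jn n_def
        by (simp add: pat_def nth_eq_iff_index_eq)
      ultimately show ?thesis by simp
    qed
    have lamxs: "lam xs = Node (lam (st (take j xs))) (lam (st (drop (Suc j) xs)))"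
      using ne j_def by (subst lam.simps) (simp add: Let_def)
    have IH1: "lam (st (take j xs)) = F (take j bs)"
      using less jn n_def by (intro less.hyps) (auto intro: pat_st pat_take)
    have IH2: "lam (st (drop (Suc j) xs)) = F (drop (Suc j) bs)"
      using less jn n_def by (intro less.hyps) (auto intro: pat_st pat_drop)
    have PP: "xs ! i < xs ! k \<longleftrightarrow> (bs ! k \<longrightarrow> bs ! i)" if "i < k" "k < n" for i k
      using less.prems that n_def by (simp add: pat_def)
    show ?thesis
    proof (cases "Suc j = n \<and> bs ! j")
      case True
      have allT: "bs ! i" if "i < n" for i
      proof (cases "i = j")
        case False
        then have "i < j" using that True by simp
        then show ?thesis using PP[of i j] big[of i] that True by simp
      qed (use True in simp)
      then have "bs = replicate n True" using len by (simp add: list_eq_iff_nth_eq)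
      then have "take j bs = replicate j True" "drop (Suc j) bs = []" using True by auto
      then have "lam xs = Node (comb j) Leaf" using lamxs IH1 IH2 by (simp add: F_rep F_nil)
      also have "\<dots> = F bs" using \<open>bs = replicate n True\<close> True F_rep[of n] by auto
      finally show ?thesis .
    next
      case False
      have bj: "\<not> bs ! j"
      proof (cases "Suc j = n")
        case False
        then have "Suc j < n" using jn by simp
        then show ?thesis using PP[of j "Suc j"] big[of "Suc j"] by auto
      qed (use False in simp)
      have after: "bs ! i" if "j < i" "i < n" for i
        using PP[of j i] big[of i] that by auto
      have d: "drop (Suc j) bs = replicate (n - Suc j) True"
        using after len by (simp add: list_eq_iff_nth_eq)
      have "bs = take j bs @ False # drop (Suc j) bs" using bj len jn
        by (metis id_take_nth_drop)
      then have "F bs = Node (F (take j bs)) (comb (n - Suc j))"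
        using d F_split by metis
      then show ?thesis using lamxs IH1 IH2 d F_rep by simp
    qed
  qed
qed


definition blist :: "nat \<Rightarrow> nat set \<Rightarrow> bool list" where
  "blist n R = map (\<lambda>i. i \<in> R) [1..<Suc n]"

lemma idx_app_in: "a \<in> set ys \<Longrightarrow> idx (ys @ zs) a = idx ys a"
  by (induction ys) auto
lemma idx_app_out: "a \<notin> set ys \<Longrightarrow> idx (ys @ zs) a = length ys + idx zs a"
  by (induction ys) auto

lemma idx_sorted:
  assumes "sorted_wrt (<) ys" "a \<in> set ys" "b \<in> set ys"
  shows "idx ys a < idx ys b \<longleftrightarrow> (a::nat) < b"
proof -
  define ia ib where "ia = idx ys a" and "ib = idx ys b"
  have h: "ia < length ys" "ib < length ys" "ys ! ia = a" "ys ! ib = b"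
    using assms idx_lt idx_nth ia_def ib_def by auto
  show ?thesis
  proof
    assume "idx ys a < idx ys b"
    then show "a < b" using h assms(1) ia_def ib_def sorted_wrt_nth_less by metis
  next
    assume ab: "a < b"
    show "idx ys a < idx ys b"
    proof (rule ccontr)
      assume "\<not> idx ys a < idx ys b"
      then have "ib < ia \<or> ib = ia" using ia_def ib_def by auto
      then show False using h assms(1) ab sorted_wrt_nth_less[OF assms(1), of ib ia] by auto
    qed
  qed
qed

lemma pat_piR: assumes R: "R \<subseteq> {1..n}" shows "pat (piR n R) (blist n R)"
proof -
  define L where "L = sorted_list_of_set R @ sorted_list_of_set ({1..n} - R)"
  have finR: "finite R" using R finite_subset by blast
  have setL: "set L = {1..n}" using R finR L_def by auto
  have nthp: "piR n R ! i = Suc (idx L (Suc i))" if "i < n" for i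
    using that by (simp add: piR_def L_def Let_def del: upt_Suc)
  have nthb: "blist n R ! i = (Suc i \<in> R)" if "i < n" for i
    using that by (simp add: blist_def del: upt_Suc)
  have ord: "idx L a < idx L b \<longleftrightarrow> (b \<in> R \<longrightarrow> a \<in> R)" if ab: "a < b" "a \<in> {1..n}" "b \<in> {1..n}" for a b
  proof -
    have s1: "sorted_wrt (<) (sorted_list_of_set R)" by simp
    have s2: "sorted_wrt (<) (sorted_list_of_set ({1..n} - R))" by simp
    have l1: "idx L c < length (sorted_list_of_set R)" if "c \<in> R" for c
      using that finR idx_lt[of c "sorted_list_of_set R"] by (simp add: L_def idx_app_in)
    have l2: "\<And>c. c \<notin> R \<Longrightarrow> idx L c \<ge> length (sorted_list_of_set R)"
      using finR by (simp add: L_def idx_app_out)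
    show ?thesis
    proof (cases "a \<in> R"; cases "b \<in> R")
      assume "a \<in> R" "b \<in> R"
      then show ?thesis using idx_sorted[OF s1, of a b] ab finR by (simp add: L_def idx_app_in)
    next
      assume "a \<in> R" "b \<notin> R"
      then show ?thesis using l1[of a] l2[of b] by simp
    next
      assume "a \<notin> R" "b \<in> R"
      then show ?thesis using l1[of b] l2[of a] by simp
    next
      assume "a \<notin> R" "b \<notin> R"
      then show ?thesis using idx_sorted[OF s2, of a b] ab finR by (simp add: L_def idx_app_out)
    qed
  qed
  have len: "length (piR n R) = n" by (simp add: piR_def Let_def del: upt_Suc)
  have dist: "distinct (piR n R)"
  proof (subst distinct_conv_nth, intro allI impI)
    fix i j assume ij: "i < length (piR n R)" "j < length (piR n R)" "i \<noteq> j"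
    then have "i < n" "j < n" using len by auto
    then have "L ! idx L (Suc i) = Suc i" "L ! idx L (Suc j) = Suc j"
      using setL idx_nth by auto
    then show "piR n R ! i \<noteq> piR n R ! j" using nthp \<open>i < n\<close> \<open>j < n\<close> ij(3) by auto
  qed
  show ?thesis unfolding pat_def
  proof (intro conjI allI impI)
    show "length (piR n R) = length (blist n R)" using len by (simp add: blist_def del: upt_Suc)
    show "distinct (piR n R)" by (rule dist)
    fix i j assume "i < j" "j < length (piR n R)"
    then show "(piR n R ! i < piR n R ! j) = (blist n R ! j \<longrightarrow> blist n R ! i)"
      using ord[of "Suc i" "Suc j"] nthp nthb len by auto
  qed
qed

lemma leftdesc_sub: "leftdesc r x \<subseteq> {1..nodes r}"
  by (induction r arbitrary: x) (fastforce split: if_splits)+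

lemma admL_iff: "length bs = nodes r \<Longrightarrow> admL r bs \<longleftrightarrow>
   (\<forall>x. 1 \<le> x \<longrightarrow> x \<le> nodes r \<longrightarrow> bs ! (x - 1) \<longrightarrow> (\<forall>y\<in>leftdesc r x. bs ! (y - 1)))"
proof (induction r arbitrary: bs)
  case Leaf then show ?case by simp
next
  case (Node s t)
  define k where "k = nodes s"
  define A where "A = take k bs"
  define B where "B = drop (Suc k) bs"
  have lA: "length A = nodes s" and lB: "length B = nodes t"
    using Node.prems k_def A_def B_def by auto
  have IHs: "admL s A \<longleftrightarrow> (\<forall>x. 1 \<le> x \<longrightarrow> x \<le> k \<longrightarrow> A ! (x - 1) \<longrightarrow> (\<forall>y\<in>leftdesc s x. A ! (y - 1)))"
    using Node.IH(1)[OF lA] k_def by simp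
  have IHt: "admL t B \<longleftrightarrow> (\<forall>x. 1 \<le> x \<longrightarrow> x \<le> nodes t \<longrightarrow> B ! (x - 1) \<longrightarrow> (\<forall>y\<in>leftdesc t x. B ! (y - 1)))"
    using Node.IH(2)[OF lB] by simp
  have ls: "\<And>x y. y \<in> leftdesc s x \<Longrightarrow> 1 \<le> y \<and> y \<le> k" using leftdesc_sub k_def by fastforce
  have lt: "\<And>x y. y \<in> leftdesc t x \<Longrightarrow> 1 \<le> y \<and> y \<le> nodes t" using leftdesc_sub by fastforce
  have Ai: "\<And>i. i < k \<Longrightarrow> A ! i = bs ! i" using A_def by simp
  have Bi: "\<And>i. B ! i = bs ! (Suc k + i)" using B_def Node.prems k_def by simp
  let ?Q = "\<lambda>x. bs ! (x - 1) \<longrightarrow> (\<forall>y\<in>leftdesc (Node s t) x. bs ! (y - 1))"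
  have Qs: "(\<forall>x. 1 \<le> x \<longrightarrow> x \<le> k \<longrightarrow> ?Q x) \<longleftrightarrow> admL s A"
  proof -
    have "?Q x \<longleftrightarrow> (A ! (x - 1) \<longrightarrow> (\<forall>y\<in>leftdesc s x. A ! (y - 1)))" if "1 \<le> x" "x \<le> k" for x
    proof -
      have "\<forall>y\<in>leftdesc s x. A ! (y - 1) = bs ! (y - 1)" using ls Ai by fastforce
      then show ?thesis using that Ai[of "x - 1"] k_def by auto
    qed
    then show ?thesis using IHs by auto
  qed
  have Qr: "?Q (Suc k) \<longleftrightarrow> (bs ! k \<longrightarrow> (\<forall>i<k. bs ! i))"
  proof -
    have "(\<forall>y\<in>{1..k}. bs ! (y - 1)) \<longleftrightarrow> (\<forall>i<k. bs ! i)"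
    proof (intro iffI allI impI ballI)
      fix i assume h: "\<forall>y\<in>{1..k}. bs ! (y - 1)" and i: "i < k"
      have "Suc i \<in> {1..k}" using i by simp
      then show "bs ! i" using h by fastforce
    next
      fix y assume h: "\<forall>i<k. bs ! i" and y: "y \<in> {1..k}"
      then have "y - 1 < k" by auto
      then show "bs ! (y - 1)" using h by blast
    qed
    then show ?thesis using k_def by simp
  qed
  have Qt: "(\<forall>x. Suc k < x \<longrightarrow> x \<le> nodes (Node s t) \<longrightarrow> ?Q x) \<longleftrightarrow> admL t B"
  proof -
    have PW: "?Q (Suc k + x') \<longleftrightarrow> (B ! (x' - 1) \<longrightarrow> (\<forall>y\<in>leftdesc t x'. B ! (y - 1)))"
      if "1 \<le> x'" "x' \<le> nodes t" for x'
    proof -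
      have e1: "bs ! (Suc k + x' - 1) = B ! (x' - 1)" using Bi[of "x' - 1"] that by simp
      have e2: "leftdesc (Node s t) (Suc k + x') = (\<lambda>y. y + Suc k) ` leftdesc t x'"
        using that k_def by simp
      have e3: "\<forall>y\<in>leftdesc t x'. bs ! (y + Suc k - 1) = B ! (y - 1)"
      proof
        fix y assume "y \<in> leftdesc t x'"
        then have "1 \<le> y" using lt by blast
        then have "y + Suc k - 1 = Suc k + (y - 1)" by simp
        then show "bs ! (y + Suc k - 1) = B ! (y - 1)" using Bi by (simp add: add.commute)
      qed
      show ?thesis using e1 e2 e3 by auto
    qed
    have E1: "(\<forall>x. Suc k < x \<longrightarrow> x \<le> nodes (Node s t) \<longrightarrow> ?Q x) \<longleftrightarrow>
               (\<forall>x'. 1 \<le> x' \<longrightarrow> x' \<le> nodes t \<longrightarrow> ?Q (Suc k + x'))"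
    proof (rule iffI)
      assume h: "\<forall>x. Suc k < x \<longrightarrow> x \<le> nodes (Node s t) \<longrightarrow> ?Q x"
      show "\<forall>x'. 1 \<le> x' \<longrightarrow> x' \<le> nodes t \<longrightarrow> ?Q (Suc k + x')"
      proof (rule allI, rule impI, rule impI)
        fix x' assume x': "1 \<le> x'" "x' \<le> nodes t"
        have "Suc k < Suc k + x'" "Suc k + x' \<le> nodes (Node s t)" using x' k_def by auto
        then show "?Q (Suc k + x')" using h by blast
      qed
    next
      assume h: "\<forall>x'. 1 \<le> x' \<longrightarrow> x' \<le> nodes t \<longrightarrow> ?Q (Suc k + x')"
      show "\<forall>x. Suc k < x \<longrightarrow> x \<le> nodes (Node s t) \<longrightarrow> ?Q x"
      proof (rule allI, rule impI, rule impI)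
        fix x assume x: "Suc k < x" "x \<le> nodes (Node s t)"
        have "1 \<le> x - Suc k" "x - Suc k \<le> nodes t" using x k_def by auto
        then have "?Q (Suc k + (x - Suc k))" using h by blast
        moreover have "Suc k + (x - Suc k) = x" using x by simp
        ultimately show "?Q x" by simp
      qed
    qed
    have E2: "(\<forall>x'. 1 \<le> x' \<longrightarrow> x' \<le> nodes t \<longrightarrow> ?Q (Suc k + x')) \<longleftrightarrow>
      (\<forall>x'. 1 \<le> x' \<longrightarrow> x' \<le> nodes t \<longrightarrow> B ! (x' - 1) \<longrightarrow> (\<forall>y\<in>leftdesc t x'. B ! (y - 1)))"
    proof (rule iffI)
      assume h: "\<forall>x'. 1 \<le> x' \<longrightarrow> x' \<le> nodes t \<longrightarrow> ?Q (Suc k + x')"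
      show "\<forall>x'. 1 \<le> x' \<longrightarrow> x' \<le> nodes t \<longrightarrow> B ! (x' - 1) \<longrightarrow> (\<forall>y\<in>leftdesc t x'. B ! (y - 1))"
      proof (rule allI, rule impI, rule impI)
        fix x' assume x': "1 \<le> x'" "x' \<le> nodes t"
        have "?Q (Suc k + x')" using h x' by blast
        then show "B ! (x' - 1) \<longrightarrow> (\<forall>y\<in>leftdesc t x'. B ! (y - 1))" using PW[OF x'] by blast
      qed
    next
      assume h: "\<forall>x'. 1 \<le> x' \<longrightarrow> x' \<le> nodes t \<longrightarrow> B ! (x' - 1) \<longrightarrow> (\<forall>y\<in>leftdesc t x'. B ! (y - 1))"
      show "\<forall>x'. 1 \<le> x' \<longrightarrow> x' \<le> nodes t \<longrightarrow> ?Q (Suc k + x')"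
      proof (rule allI, rule impI, rule impI)
        fix x' assume x': "1 \<le> x'" "x' \<le> nodes t"
        have "B ! (x' - 1) \<longrightarrow> (\<forall>y\<in>leftdesc t x'. B ! (y - 1))" using h x' by blast
        then show "?Q (Suc k + x')" using PW[OF x'] by blast
      qed
    qed
    show ?thesis by (simp only: E1 E2 IHt)
  qed
  have split: "(\<forall>x. 1 \<le> x \<longrightarrow> x \<le> nodes (Node s t) \<longrightarrow> ?Q x) \<longleftrightarrow>
     (\<forall>x. 1 \<le> x \<longrightarrow> x \<le> k \<longrightarrow> ?Q x) \<and> ?Q (Suc k) \<and> (\<forall>x. Suc k < x \<longrightarrow> x \<le> nodes (Node s t) \<longrightarrow> ?Q x)"
  proof (rule iffI)
    assume h: "\<forall>x. 1 \<le> x \<longrightarrow> x \<le> nodes (Node s t) \<longrightarrow> ?Q x"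
    have "\<forall>x. 1 \<le> x \<longrightarrow> x \<le> k \<longrightarrow> ?Q x"
    proof (rule allI, rule impI, rule impI)
      fix x assume x: "1 \<le> x" "x \<le> k"
      then have "x \<le> nodes (Node s t)" using k_def by simp
      then show "?Q x" using h x(1) by blast
    qed
    moreover have "\<forall>x. Suc k < x \<longrightarrow> x \<le> nodes (Node s t) \<longrightarrow> ?Q x"
    proof (rule allI, rule impI, rule impI)
      fix x assume x: "Suc k < x" "x \<le> nodes (Node s t)"
      then have "1 \<le> x" by simp
      then show "?Q x" using h x(2) by blast
    qed
    moreover have "?Q (Suc k)" using h[rule_format, of "Suc k"] k_def by simp
    ultimately show "(\<forall>x. 1 \<le> x \<longrightarrow> x \<le> k \<longrightarrow> ?Q x) \<and> ?Q (Suc k) \<and>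
      (\<forall>x. Suc k < x \<longrightarrow> x \<le> nodes (Node s t) \<longrightarrow> ?Q x)" by blast
  next
    assume h: "(\<forall>x. 1 \<le> x \<longrightarrow> x \<le> k \<longrightarrow> ?Q x) \<and> ?Q (Suc k) \<and>
      (\<forall>x. Suc k < x \<longrightarrow> x \<le> nodes (Node s t) \<longrightarrow> ?Q x)"
    show "\<forall>x. 1 \<le> x \<longrightarrow> x \<le> nodes (Node s t) \<longrightarrow> ?Q x"
    proof (rule allI, rule impI, rule impI)
      fix x assume x: "1 \<le> x" "x \<le> nodes (Node s t)"
      consider "x \<le> k" | "x = Suc k" | "Suc k < x" by linarith
      then show "?Q x"
      proof cases
        case 1 then show ?thesis using h x by blast
      next
        case 2 then show ?thesis using h by blast
      next
        case 3 then show ?thesis using h x by blast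
      qed
    qed
  qed
  have adm: "admL (Node s t) bs \<longleftrightarrow> admL s A \<and> admL t B \<and> (bs ! k \<longrightarrow> (\<forall>i<k. bs ! i))"
    using A_def B_def k_def by simp
  have R: "(\<forall>x. 1 \<le> x \<longrightarrow> x \<le> nodes (Node s t) \<longrightarrow> ?Q x) \<longleftrightarrow>
     admL s A \<and> (bs ! k \<longrightarrow> (\<forall>i<k. bs ! i)) \<and> admL t B"
    by (simp only: split Qs Qr Qt)
  show ?case using adm R by blast
qed


lemma adm_bridge: assumes "nodes r = n" "R \<subseteq> {1..n}"
  shows "admissible r R \<longleftrightarrow> admL r (blist n R)"
proof -
  have lb: "length (blist n R) = nodes r" using assms by (simp add: blist_def)
  have bn: "blist n R ! (x - 1) = (x \<in> R)" if "1 \<le> x" "x \<le> n" for x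
    using that nth_upt[of 1 "x - 1" "Suc n"] by (simp add: blist_def del: upt_Suc)
  have ld: "\<And>x. leftdesc r x \<subseteq> {1..n}" using leftdesc_sub assms(1) by auto
  have "admissible r R \<longleftrightarrow> (\<forall>x. 1 \<le> x \<longrightarrow> x \<le> nodes r \<longrightarrow> blist n R ! (x - 1) \<longrightarrow>
          (\<forall>y\<in>leftdesc r x. blist n R ! (y - 1)))"
    unfolding admissible_def
  proof (intro iffI allI impI ballI subsetI)
    fix x y assume H: "\<forall>x\<in>R. leftdesc r x \<subseteq> R" and x: "1 \<le> x" "x \<le> nodes r"
      and bx: "blist n R ! (x - 1)" and y: "y \<in> leftdesc r x"
    have "x \<in> R" using bn[OF x(1)] x(2) assms(1) bx by simp
    then have "y \<in> R" using H y by blast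
    moreover have "1 \<le> y" "y \<le> n" using subsetD[OF ld[of x] y] by auto
    ultimately show "blist n R ! (y - 1)" using bn by simp
  next
    fix x y assume H: "\<forall>x. 1 \<le> x \<longrightarrow> x \<le> nodes r \<longrightarrow> blist n R ! (x - 1) \<longrightarrow>
          (\<forall>y\<in>leftdesc r x. blist n R ! (y - 1))" and x: "x \<in> R" and y: "y \<in> leftdesc r x"
    have x1: "1 \<le> x" "x \<le> n" using x assms(2) by auto
    then have "blist n R ! (x - 1)" using bn x by simp
    then have "blist n R ! (y - 1)" using H x1 y assms(1) by blast
    moreover have "1 \<le> y" "y \<le> n" using subsetD[OF ld[of x] y] by auto
    ultimately show "y \<in> R" using bn by simp
  qed
  then show ?thesis using admL_iff[OF lb] by simp
qed

theorem lemma8p8: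
  fixes n :: nat and r :: btree and R :: "nat set"
  assumes "nodes r = n" and "R \<subseteq> {1..n}"
  shows "tamari_le (lam (piR n R)) r \<longleftrightarrow> admissible r R"
proof -
  have lamF: "lam (piR n R) = F (blist n R)" using lam_pat pat_piR assms(2) by blast
  have lb: "length (blist n R) = nodes r" using assms by (simp add: blist_def)
  show ?thesis unfolding lamF adm_bridge[OF assms]
    using B1[OF lb] le_admL[OF _ lb] admL_F[of "blist n R"] by blast
qed

end
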